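(* Let $f:2^V\to\mathbb{Z}_{\ge0}$ be a connectivity function, $W\subseteq V$, and $(C_1,C_2,C_3)$ a tripartition of $V$ such that for each $i\in\{1,2,3\}$, $f(C_i)<f(W)/2$ and $W$ directly orients $C_i$. Then $(C_1,C_2,C_3)$ is a $W$-improvement.
   Context: A connectivity function $f:2^V\to\mathbb{Z}_{\ge0}$ ($V$ finite) satisfies $f(\emptyset)=0$, $f(X)=f(V\setminus X)$, and $f(X\cup Y)+f(X\cap Y)\le f(X)+f(Y)$. Write $\overline{X}=V\setminus X$. The set $W$ directly orients $C$ if $f(C\cap W)<f(\overline{C}\cap W)$ and $f(C\cap\overline{W})<f(\overline{C}\cap\overline{W})$. A tripartition of $V$ is a triple of pairwise disjoint (possibly empty) sets with union $V$. For $W\subseteq V$, a $W$-improvement is a tripartition $(C_1,C_2,C_3)$ of $V$ with $f(C_i)<f(W)/2$, $f(C_i\cap W)<f(W)$, $f(C_i\cap\overline{W})<f(W)$ for each $i$. *)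

theory Defs
  imports Complex_Main
begin

definition connectivity_function :: "'a set \<Rightarrow> ('a set \<Rightarrow> nat) \<Rightarrow> bool" where
  "connectivity_function V f \<longleftrightarrow> finite V \<and> f {} = 0 \<and>
     (\<forall>X. X \<subseteq> V \<longrightarrow> f X = f (V - X)) \<and>
     (\<forall>X Y. X \<subseteq> V \<longrightarrow> Y \<subseteq> V \<longrightarrow> f (X \<union> Y) + f (X \<inter> Y) \<le> f X + f Y)"

definition directly_orients :: "'a set \<Rightarrow> ('a set \<Rightarrow> nat) \<Rightarrow> 'a set \<Rightarrow> 'a set \<Rightarrow> bool" where
  "directly_orients V f W C \<longleftrightarrow>
     f (C \<inter> W) < f ((V - C) \<inter> W) \<and> f (C \<inter> (V - W)) < f ((V - C) \<inter> (V - W))"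

definition tripartition :: "'a set \<Rightarrow> 'a set \<Rightarrow> 'a set \<Rightarrow> 'a set \<Rightarrow> bool" where
  "tripartition V C1 C2 C3 \<longleftrightarrow> C1 \<inter> C2 = {} \<and> C1 \<inter> C3 = {} \<and> C2 \<inter> C3 = {}
     \<and> C1 \<union> C2 \<union> C3 = V"

definition W_improvement :: "'a set \<Rightarrow> ('a set \<Rightarrow> nat) \<Rightarrow> 'a set \<Rightarrow> 'a set \<Rightarrow> 'a set \<Rightarrow> 'a set \<Rightarrow> bool" where
  "W_improvement V f W C1 C2 C3 \<longleftrightarrow> tripartition V C1 C2 C3 \<and>
     (\<forall>C \<in> {C1, C2, C3}. real (f C) < real (f W) / 2 \<and> f (C \<inter> W) < f W \<and> f (C \<inter> (V - W)) < f W)"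

end

theory Submission
  imports Defs
begin

lemma one_part:
  fixes V W C :: "'a set" and f :: "'a set \<Rightarrow> nat"
  assumes cf: "connectivity_function V f"
    and WV: "W \<subseteq> V" and CV: "C \<subseteq> V"
    and c: "real (f C) < real (f W) / 2" and d: "directly_orients V f W C"
  shows "f (C \<inter> W) < f W \<and> f (C \<inter> (V - W)) < f W"
proof -
  have sym: "\<And>X. X \<subseteq> V \<Longrightarrow> f X = f (V - X)" and f0: "f {} = 0"
    and sub: "\<And>X Y. X \<subseteq> V \<Longrightarrow> Y \<subseteq> V \<Longrightarrow> f (X \<union> Y) + f (X \<inter> Y) \<le> f X + f Y"
    using cf unfolding connectivity_function_def by blast+
  have c2: "2 * f C < f W" using c by linarith
  have a1: "f (C \<inter> W) < f ((V - C) \<inter> W)" and b1: "f (C \<inter> (V - W)) < f ((V - C) \<inter> (V - W))"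
    using d unfolding directly_orients_def by auto
  have wW: "f (V - W) = f W" using sym[OF WV] by simp
  have e1: "f W \<le> f (C \<inter> W) + f ((V - C) \<inter> W)"
  proof -
    have "(C \<inter> W) \<union> ((V - C) \<inter> W) = W" "(C \<inter> W) \<inter> ((V - C) \<inter> W) = {}" using WV by auto
    then show ?thesis using sub[of "C \<inter> W" "(V - C) \<inter> W"] f0 WV by auto
  qed
  have e2: "f W \<le> f (C \<inter> (V - W)) + f ((V - C) \<inter> (V - W))"
  proof -
    have "(C \<inter> (V - W)) \<union> ((V - C) \<inter> (V - W)) = V - W" "(C \<inter> (V - W)) \<inter> ((V - C) \<inter> (V - W)) = {}" using CV by auto
    then show ?thesis using sub[of "C \<inter> (V - W)" "(V - C) \<inter> (V - W)"] f0 wW by auto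
  qed
  have e3: "f (C \<inter> W) + f ((V - C) \<inter> (V - W)) \<le> f C + f W"
  proof -
    have "V - (C \<union> W) = (V - C) \<inter> (V - W)" by blast
    moreover have "f (C \<union> W) = f (V - (C \<union> W))" using sym[of "C \<union> W"] CV WV by blast
    ultimately have "f (C \<union> W) = f ((V - C) \<inter> (V - W))" by simp
    then show ?thesis using sub[OF CV WV] by linarith
  qed
  have e4: "f (C \<inter> (V - W)) + f ((V - C) \<inter> W) \<le> f C + f W"
  proof -
    have "V - ((V - C) \<union> W) = C \<inter> (V - W)" using CV by auto
    then have "f ((V - C) \<union> W) = f (C \<inter> (V - W))" using sym[of "(V - C) \<union> W"] WV by auto
    moreover have "f (V - C) = f C" using sym[OF CV] by simp
    moreover have "f ((V - C) \<union> W) + f ((V - C) \<inter> W) \<le> f (V - C) + f W"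
      using sub[of "V - C" W] WV by blast
    ultimately show ?thesis by linarith
  qed
  show ?thesis using a1 b1 e1 e2 e3 e4 c2 by linarith
qed

theorem lemma4:
  fixes V W C1 C2 C3 :: "'a set" and f :: "'a set \<Rightarrow> nat"
  assumes "connectivity_function V f"
    and "W \<subseteq> V"
    and "tripartition V C1 C2 C3"
    and "\<forall>C \<in> {C1, C2, C3}. real (f C) < real (f W) / 2 \<and> directly_orients V f W C"
  shows "W_improvement V f W C1 C2 C3"
proof -
  have sub: "\<forall>C \<in> {C1, C2, C3}. C \<subseteq> V" using assms(3) unfolding tripartition_def by auto
  have "\<forall>C \<in> {C1, C2, C3}. real (f C) < real (f W) / 2 \<and> f (C \<inter> W) < f W \<and> f (C \<inter> (V - W)) < f W"
  proof
    fix C assume h: "C \<in> {C1, C2, C3}"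
    have "C \<subseteq> V" using sub h by blast
    moreover have "real (f C) < real (f W) / 2" "directly_orients V f W C" using assms(4) h by blast+
    ultimately show "real (f C) < real (f W) / 2 \<and> f (C \<inter> W) < f W \<and> f (C \<inter> (V - W)) < f W"
      using one_part[OF assms(1) assms(2)] by blast
  qed
  then show ?thesis unfolding W_improvement_def using assms(3) by blast
qed

end
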